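(* Let $P,Q\subseteq\mathbb R^n$ be nonzero polyhedral cones. Consider the following cutting-plane iteration (run without stopping): choose $u^1\in P\cap S_n$ and $v^1\in\mathtt{Proj}_{Q\cap S_n}(u^1)$; for $k=1,2,\dots$, let $(u^{k+1},r^{k+1})$ be a global solution of $$\min_{(u,r)\in\mathbb R^{n+1}} r\quad\text{s.t.}\quad u\in P,\ \|u\|^2=1,\ \langle v^j,u\rangle\le r\ (j=1,\dots,k),$$ and let $v^{k+1}\in\mathtt{Proj}_{Q\cap S_n}(u^{k+1})$. Then every cluster point $\bar u$ of $\{u^k\}$ is a global solution of $\min_{u\in P\cap S_n}F_Q(u)$; for any $\bar v\in\mathtt{Proj}_{Q\cap S_n}(\bar u)$, the pair $(\bar u,\bar v)$ solves the max-min problem defining $\Theta(P,Q)$ (i.e. $\bar u$ attains the outer maximum, $\bar v$ attains the inner minimum for $\bar u$, and $\arccos\langle\bar u,\bar v\rangle=\Theta(P,Q)$); and $\lim_k r^k=\cos\Theta(P,Q)$.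
   Context: $S_n$ is the unit sphere of $\mathbb R^n$. A polyhedral cone is a finitely generated cone $\{Gx:x\ge0\}$. $\mathtt{Proj}_X(u):=\arg\min_{x\in X}\|x-u\|$. $F_Q(u):=\max_{v\in Q\cap S_n}\langle u,v\rangle$ and $\Theta(P,Q):=\max_{u\in P\cap S_n}\min_{v\in Q\cap S_n}\arccos\langle u,v\rangle$ (so $\cos\Theta(P,Q)=\min_{u\in P\cap S_n}F_Q(u)$). *)

theory Defs
  imports "HOL-Analysis.Analysis"
begin

text \<open>Polyhedral cone: finitely generated cone {G x : x >= 0}, i.e. the set of
  nonnegative combinations of finitely many generators (the columns of G).\<close>
definition polyhedral_cone :: "('a::real_vector) set \<Rightarrow> bool" where
  "polyhedral_cone P \<longleftrightarrow> (\<exists>G. finite G \<and>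
     P = {(\<Sum>g\<in>G. c g *\<^sub>R g) | c. \<forall>g\<in>G. c g \<ge> 0})"

definition proj_set :: "('a::real_normed_vector) set \<Rightarrow> 'a \<Rightarrow> 'a set" where
  "proj_set X u = {x \<in> X. \<forall>y\<in>X. norm (x - u) \<le> norm (y - u)}"

definition F_fun :: "('a::real_inner) set \<Rightarrow> 'a \<Rightarrow> real" where
  "F_fun Q u = (SUP v\<in>Q \<inter> sphere 0 1. inner u v)"

definition inner_angle :: "('a::real_inner) set \<Rightarrow> 'a \<Rightarrow> real" where
  "inner_angle Q u = (INF v\<in>Q \<inter> sphere 0 1. arccos (inner u v))"

definition Theta :: "('a::real_inner) set \<Rightarrow> 'a set \<Rightarrow> real" where
  "Theta P Q = (SUP u\<in>P \<inter> sphere 0 1. inner_angle Q u)"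

end

theory Submission
  imports Defs
begin
lemma cc_sum: "finite A \<Longrightarrow> convex_cone C \<Longrightarrow> (\<forall>g\<in>A. f g \<in> C) \<Longrightarrow> sum f A \<in> C"
  by (induction A rule: finite_induct) (auto simp: convex_cone_iff)

lemma poly_closed:
  fixes P :: "'a::euclidean_space set"
  assumes "polyhedral_cone P" shows "closed P"
proof -
  obtain G where G: "finite G" and PG: "P = {(\<Sum>g\<in>G. c g *\<^sub>R g) | c. \<forall>g\<in>G. c g \<ge> 0}"
    using assms unfolding polyhedral_cone_def by blast
  have "P = convex_cone hull G"
  proof
    show "P \<subseteq> convex_cone hull G"
    proof
      fix x assume "x \<in> P"
      then obtain c where x: "x = (\<Sum>g\<in>G. c g *\<^sub>R g)" and c: "\<forall>g\<in>G. c g \<ge> 0" using PG by blast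
      show "x \<in> convex_cone hull G" unfolding x
        by (rule cc_sum[OF G convex_cone_convex_cone_hull]) (simp add: c convex_cone_hull_mul hull_inc)
    qed
  next
    show "convex_cone hull G \<subseteq> P"
    proof (rule hull_minimal)
      show "G \<subseteq> P"
      proof
        fix h assume h: "h \<in> G"
        have "(\<Sum>g\<in>G. (if g = h then 1 else 0) *\<^sub>R g) = h"
        proof -
          have "(\<Sum>g\<in>G. (if g = h then 1 else 0) *\<^sub>R g) = (\<Sum>g\<in>G. if g = h then g else 0)"
            by (rule sum.cong) auto
          also have "\<dots> = h" using G h by simp
          finally show ?thesis .
        qed
        then show "h \<in> P" unfolding PG
          by (intro CollectI exI[of _ "\<lambda>g. if g = h then 1 else 0"]) auto
      qed
      show "convex_cone P" unfolding convex_cone_iff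
      proof (intro conjI ballI allI impI)
        show "0 \<in> P" unfolding PG by (rule CollectI, rule exI[of _ "\<lambda>g. 0"]) auto
      next
        fix x y assume "x \<in> P" "y \<in> P"
        then obtain c d where x: "x = (\<Sum>g\<in>G. c g *\<^sub>R g)" and c: "\<forall>g\<in>G. c g \<ge> 0"
          and y: "y = (\<Sum>g\<in>G. d g *\<^sub>R g)" and d: "\<forall>g\<in>G. d g \<ge> 0" using PG by blast
        have "x + y = (\<Sum>g\<in>G. (c g + d g) *\<^sub>R g)" unfolding x y
          by (simp add: scaleR_add_left sum.distrib)
        then show "x + y \<in> P" unfolding PG using c d
          by (intro CollectI exI[of _ "\<lambda>g. c g + d g"]) auto
      next
        fix x and a :: real assume "x \<in> P" "0 \<le> a"
        then obtain c where x: "x = (\<Sum>g\<in>G. c g *\<^sub>R g)" and c: "\<forall>g\<in>G. c g \<ge> 0" using PG by blast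
        have "a *\<^sub>R x = (\<Sum>g\<in>G. (a * c g) *\<^sub>R g)" unfolding x
          by (simp add: scaleR_right.sum)
        then show "a *\<^sub>R x \<in> P" unfolding PG using c \<open>0 \<le> a\<close>
          by (intro CollectI exI[of _ "\<lambda>g. a * c g"]) auto
      qed
    qed
  qed
  then show ?thesis using G closed_convex_cone_hull by simp
qed

lemma inner_unit:
  fixes a b :: "'a::real_inner"
  assumes "norm a = 1" "norm b = 1" shows "-1 \<le> inner a b \<and> inner a b \<le> 1"
  using Cauchy_Schwarz_ineq2[of a b] assms by auto

lemma inner_le_norm1:
  fixes a b :: "'a::real_inner"
  assumes "norm b = 1" shows "inner a b \<le> norm a"
  using norm_cauchy_schwarz[of a b] assms by auto

lemma proj_max:
  fixes Q :: "'a::real_inner set"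
  assumes "x \<in> proj_set (Q \<inter> sphere 0 1) u" "norm u = 1" "y \<in> Q \<inter> sphere 0 1"
  shows "inner u y \<le> inner u x"
proof -
  have x: "x \<in> Q \<inter> sphere 0 1" and le: "norm (x - u) \<le> norm (y - u)"
    using assms unfolding proj_set_def by auto
  have sq: "(norm (x - u))\<^sup>2 \<le> (norm (y - u))\<^sup>2" using le by (simp add: power_mono)
  have e: "\<And>z. norm z = 1 \<Longrightarrow> (norm (z - u))\<^sup>2 = 2 - 2 * inner u z"
    using assms(2) by (simp add: power2_norm_eq_inner norm_eq_1 inner_diff_left inner_diff_right inner_commute)
  have "norm x = 1" "norm y = 1" using x assms(3) by auto
  then show ?thesis using sq e[of x] e[of y] by linarith
qed

lemma F_upper:
  fixes Q :: "'a::real_inner set"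
  assumes "v \<in> Q \<inter> sphere 0 1" shows "inner w v \<le> F_fun Q w"
  unfolding F_fun_def
proof (rule cSUP_upper[OF assms])
  show "bdd_above ((\<lambda>v. inner w v) ` (Q \<inter> sphere 0 1))"
    by (rule bdd_aboveI[of _ "norm w"]) (auto intro: inner_le_norm1)
qed

lemma F_least:
  fixes Q :: "'a::real_inner set"
  assumes "Q \<inter> sphere 0 1 \<noteq> {}" "\<And>v. v \<in> Q \<inter> sphere 0 1 \<Longrightarrow> inner w v \<le> R"
  shows "F_fun Q w \<le> R"
  unfolding F_fun_def using assms by (intro cSUP_least) auto

lemma angle_eq:
  fixes Q :: "'a::real_inner set"
  assumes "norm w = 1" "p \<in> Q \<inter> sphere 0 1" "\<And>v. v \<in> Q \<inter> sphere 0 1 \<Longrightarrow> inner w v \<le> inner w p"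
  shows "F_fun Q w = inner w p \<and> inner_angle Q w = arccos (inner w p)"
proof
  show "F_fun Q w = inner w p" unfolding F_fun_def
    by (rule cSup_eq_maximum) (use assms in auto)
  show "inner_angle Q w = arccos (inner w p)" unfolding inner_angle_def
  proof (rule cInf_eq_minimum)
    show "arccos (inner w p) \<in> (\<lambda>v. arccos (inner w v)) ` (Q \<inter> sphere 0 1)" using assms by auto
  next
    fix x assume "x \<in> (\<lambda>v. arccos (inner w v)) ` (Q \<inter> sphere 0 1)"
    then obtain v where v: "v \<in> Q \<inter> sphere 0 1" and x: "x = arccos (inner w v)" by auto
    show "arccos (inner w p) \<le> x" unfolding x
      by (rule arccos_le_arccos) (use inner_unit[of w v] inner_unit[of w p] assms v in auto)
  qed
qed

theorem mainTheorem11: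
  fixes P Q :: "(real ^ 'n) set"
    and u v :: "nat \<Rightarrow> real ^ 'n"
    and r :: "nat \<Rightarrow> real"
  assumes P: "polyhedral_cone P" "P \<noteq> {0}"
    and Q: "polyhedral_cone Q" "Q \<noteq> {0}"
    and u1: "u 1 \<in> P \<inter> sphere 0 1"
    and v_proj: "\<And>k. k \<ge> 1 \<Longrightarrow> v k \<in> proj_set (Q \<inter> sphere 0 1) (u k)"
    and feas: "\<And>k. k \<ge> 1 \<Longrightarrow>
        u (Suc k) \<in> P \<and> (norm (u (Suc k)))\<^sup>2 = 1 \<and>
        (\<forall>j\<in>{1..k}. inner (v j) (u (Suc k)) \<le> r (Suc k))"
    and opt: "\<And>k w s. k \<ge> 1 \<Longrightarrow> w \<in> P \<Longrightarrow> (norm w)\<^sup>2 = 1 \<Longrightarrow>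
        (\<forall>j\<in>{1..k}. inner (v j) w \<le> s) \<Longrightarrow> r (Suc k) \<le> s"
  shows "(\<forall>ubar. (\<exists>\<sigma>. strict_mono \<sigma> \<and> (u \<circ> \<sigma>) \<longlonglongrightarrow> ubar) \<longrightarrow>
            (ubar \<in> P \<inter> sphere 0 1 \<and>
             (\<forall>w\<in>P \<inter> sphere 0 1. F_fun Q ubar \<le> F_fun Q w) \<and>
             (\<forall>vbar\<in>proj_set (Q \<inter> sphere 0 1) ubar.
                inner_angle Q ubar = Theta P Q \<and>
                arccos (inner ubar vbar) = inner_angle Q ubar \<and>
                arccos (inner ubar vbar) = Theta P Q)))
         \<and> r \<longlonglongrightarrow> cos (Theta P Q)"
  proof -
  define K where "K = Q \<inter> sphere 0 1"
  define S where "S = P \<inter> sphere 0 1"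
  have clP: "closed P" using poly_closed P(1) by blast
  have clQ: "closed Q" using poly_closed Q(1) by blast
  have compK: "compact K" unfolding K_def using clQ by (simp add: closed_Int_compact)
  have clS: "closed S" unfolding S_def using clP by (simp add: closed_Int)
  have vK: "v k \<in> K" if "k \<ge> 1" for k using v_proj[OF that] unfolding proj_set_def K_def by auto
  have Kne: "Q \<inter> sphere 0 1 \<noteq> {}" using vK[of 1] K_def by auto
  have uS: "u k \<in> S" if k1: "k \<ge> 1" for k
  proof (cases "k = 1")
    case True then show ?thesis using u1 S_def by simp
  next
    case False
    then obtain k' where k: "k = Suc k'" "k' \<ge> 1" using k1 False by (cases k) auto
    then show ?thesis using feas[OF k(2)] S_def by (smt (verit) norm_ge_zero power2_eq_1_iff mem_sphere_0 IntI)
  qed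
  have unorm: "norm (u k) = 1" if "k \<ge> 1" for k using uS[OF that] S_def by simp
  have vmax: "inner (u k) y \<le> inner (u k) (v k)" if "k \<ge> 1" "y \<in> K" for k y
    using proj_max[OF v_proj[OF that(1)] unorm[OF that(1)]] that(2) K_def by blast
  have mono: "r (Suc k) \<le> r (Suc (Suc k))" if "k \<ge> 1" for k
    using opt[OF that, of "u (Suc (Suc k))" "r (Suc (Suc k))"] feas[of "Suc k"] that by auto
  have rF: "r (Suc k) \<le> F_fun Q w" if "k \<ge> 1" "w \<in> S" for k w
  proof (rule opt[OF that(1)])
    show "w \<in> P" "(norm w)\<^sup>2 = 1" using that(2) S_def by auto
    show "\<forall>j\<in>{1..k}. inner (v j) w \<le> F_fun Q w"
      using vK F_upper[of _ Q w] K_def by (metis atLeastAtMost_iff inner_commute)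
  qed
  define t where "t n = r (n + 2)" for n
  have "incseq t" unfolding t_def by (rule incseq_SucI) (use mono in simp)
  moreover have "\<forall>i. t i \<le> F_fun Q (u 1)"
  proof
    fix i show "t i \<le> F_fun Q (u 1)" unfolding t_def using rF[of "i + 1" "u 1"] uS[of 1] by simp
  qed
  ultimately obtain L where tL: "t \<longlonglongrightarrow> L" and tle: "\<forall>i. t i \<le> L"
    using incseq_convergent by blast
  have rL: "r \<longlonglongrightarrow> L" using tL unfolding t_def by (rule LIMSEQ_offset)
  have rle: "r k \<le> L" if "k \<ge> 2" for k
  proof -
    have "k - 2 + 2 = k" using that by simp
    then show ?thesis using tle[rule_format, of "k - 2"] unfolding t_def by metis
  qed
  have LF: "L \<le> F_fun Q w" if "w \<in> S" for w
  proof (rule LIMSEQ_le_const2[OF rL], intro exI[of _ 2] allI impI)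
    fix n :: nat assume n: "2 \<le> n"
    then have "n = Suc (n - 1)" "n - 1 \<ge> 1" by auto
    then show "r n \<le> F_fun Q w" using rF[OF _ that, of "n - 1"] by metis
  qed
  have attain: "\<exists>p\<in>K. \<forall>y\<in>K. inner w y \<le> inner w p" for w
  proof (rule continuous_attains_sup[OF compK])
    show "K \<noteq> {}" using Kne K_def by simp
    show "continuous_on K (inner w)" by (intro continuous_intros)
  qed
  have Fw: "-1 \<le> F_fun Q w \<and> F_fun Q w \<le> 1 \<and> inner_angle Q w = arccos (F_fun Q w)" if "w \<in> S" for w
  proof -
    obtain p where p: "p \<in> K" "\<forall>y\<in>K. inner w y \<le> inner w p" using attain by blast
    have "F_fun Q w = inner w p \<and> inner_angle Q w = arccos (inner w p)"
      by (rule angle_eq) (use that p S_def K_def in auto)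
    moreover have "-1 \<le> inner w p \<and> inner w p \<le> 1" using inner_unit[of w p] that p S_def K_def by auto
    ultimately show ?thesis by simp
  qed
  have cl: "ubar \<in> S \<and> F_fun Q ubar \<le> L" if sig: "strict_mono \<sigma>" and lim: "(u \<circ> \<sigma>) \<longlonglongrightarrow> ubar" for \<sigma> ubar
  proof
    have ev: "eventually (\<lambda>n. (u \<circ> \<sigma>) n \<in> S) sequentially"
      unfolding eventually_sequentially using uS seq_suble[OF sig]
      by (metis comp_apply le_trans)
    show "ubar \<in> S" by (rule Lim_in_closed_set[OF clS ev _ lim]) simp
    show "F_fun Q ubar \<le> L"
    proof (rule F_least[OF Kne])
      fix y assume y: "y \<in> Q \<inter> sphere 0 1"
      show "inner ubar y \<le> L"
      proof (rule field_le_epsilon)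
        fix e :: real assume e: "0 < e"
        obtain N where N: "\<forall>n\<ge>N. dist ((u \<circ> \<sigma>) n) ubar < e / 3"
          using lim e unfolding lim_sequentially by (meson divide_pos_pos zero_less_numeral)
        define i where "i = N + 1"
        define l where "l = N + 2"
        define a where "a = u (\<sigma> i)"
        define b where "b = u (\<sigma> l)"
        define p where "p = v (\<sigma> i)"
        have si: "\<sigma> i \<ge> 1" using seq_suble[OF sig, of i] i_def by simp
        have sil: "\<sigma> i < \<sigma> l" using sig i_def l_def by (simp add: strict_mono_def)
        obtain k where k: "\<sigma> l = Suc k" "k \<ge> \<sigma> i" using sil by (cases "\<sigma> l") auto
        have k1: "k \<ge> 1" using k si by simp
        have "inner p b \<le> r (\<sigma> l)" using feas[OF k1] k si unfolding p_def b_def by auto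
        also have "\<dots> \<le> L" using rle[of "\<sigma> l"] k k1 by simp
        finally have pb: "inner p b \<le> L" .
        have da: "dist a ubar < e/3" using N i_def a_def by auto
        have db: "dist b ubar < e/3" using N l_def b_def by auto
        have pK: "p \<in> K" using vK[OF si] p_def by simp
        have np: "norm p = 1" "norm y = 1" using pK y K_def by auto
        have "inner ubar y = inner a y + inner (ubar - a) y" by (simp add: inner_diff_left)
        also have "inner (ubar - a) y \<le> norm (ubar - a)" using inner_le_norm1 np by blast
        also have "inner a y \<le> inner a p" using vmax[OF si, of y] y K_def a_def p_def by simp
        also have "inner a p = inner p b + inner (a - b) p" by (simp add: inner_diff_left inner_diff_right inner_commute)
        also have "inner (a - b) p \<le> norm (a - b)" using inner_le_norm1 np by blast
        finally have "inner ubar y \<le> inner p b + norm (a - b) + norm (ubar - a)" by simp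
        moreover have "norm (a - b) \<le> dist a ubar + dist b ubar"
          using dist_triangle[of a b ubar] by (simp add: dist_norm norm_minus_commute)
        moreover have "norm (ubar - a) = dist a ubar" by (simp add: dist_norm norm_minus_commute)
        ultimately show "inner ubar y \<le> L + e" using pb da db by linarith
      qed
    qed
  qed
  obtain ub0 \<sigma>0 where s0: "strict_mono \<sigma>0" "(u \<circ> \<sigma>0) \<longlonglongrightarrow> ub0"
  proof -
    have sc: "seq_compact (sphere (0::real^'n) 1)" by (simp add: compact_imp_seq_compact)
    have us1: "\<And>n. u (n + 1) \<in> sphere 0 1" using uS S_def by auto
    obtain l \<rho> where "strict_mono \<rho>" "((\<lambda>n. u (n + 1)) \<circ> \<rho>) \<longlonglongrightarrow> l"
      using sc[unfolded seq_compact_def, rule_format, of "\<lambda>n. u (n + 1)", OF us1] by blast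
    moreover have "strict_mono (\<lambda>n. \<rho> n + 1)" using \<open>strict_mono \<rho>\<close> by (simp add: strict_mono_def)
    moreover have "(\<lambda>n. u (n + 1)) \<circ> \<rho> = u \<circ> (\<lambda>n. \<rho> n + 1)" by auto
    ultimately show ?thesis using that by metis
  qed
  have key: "F_fun Q ub = L \<and> Theta P Q = arccos L \<and> (\<forall>w\<in>S. F_fun Q ub \<le> F_fun Q w)" if "ub \<in> S" "F_fun Q ub \<le> L" for ub
  proof -
    have FL: "F_fun Q ub = L" using LF[OF that(1)] that(2) by simp
    have "Theta P Q = arccos (F_fun Q ub)" unfolding Theta_def S_def[symmetric]
    proof (rule cSup_eq_maximum)
      show "arccos (F_fun Q ub) \<in> inner_angle Q ` S" using Fw[OF that(1)] that(1) by force
    next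
      fix x assume "x \<in> inner_angle Q ` S"
      then obtain w where w: "w \<in> S" "x = inner_angle Q w" by auto
      have ia: "inner_angle Q w = arccos (F_fun Q w)" using Fw[OF w(1)] by simp
      show "x \<le> arccos (F_fun Q ub)" unfolding w(2) ia
        by (rule arccos_le_arccos) (use Fw[OF w(1)] Fw[OF that(1)] FL LF[OF w(1)] in auto)
    qed
    then show ?thesis using FL LF by simp
  qed
  have c0: "ub0 \<in> S" "F_fun Q ub0 \<le> L" using cl[OF s0] by auto
  have L1: "-1 \<le> L \<and> L \<le> 1" using key[OF c0] Fw[OF c0(1)] by metis
  have thL: "cos (Theta P Q) = L" using key[OF c0] L1 by (simp add: cos_arccos)
  show ?thesis
  proof (intro conjI allI impI)
    show "r \<longlonglongrightarrow> cos (Theta P Q)" using rL thL by simp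
  next
    fix ubar assume "\<exists>\<sigma>. strict_mono \<sigma> \<and> (u \<circ> \<sigma>) \<longlonglongrightarrow> ubar"
    then obtain \<sigma> where "strict_mono \<sigma>" "(u \<circ> \<sigma>) \<longlonglongrightarrow> ubar" by blast
    from cl[OF this] have c: "ubar \<in> S" "F_fun Q ubar \<le> L" by auto
    note kk = key[OF c]
    show "ubar \<in> P \<inter> sphere 0 1" using c S_def by simp
    show "\<forall>w\<in>P \<inter> sphere 0 1. F_fun Q ubar \<le> F_fun Q w" using kk S_def by metis
    show "\<forall>vbar\<in>proj_set (Q \<inter> sphere 0 1) ubar.
                inner_angle Q ubar = Theta P Q \<and>
                arccos (inner ubar vbar) = inner_angle Q ubar \<and>
                arccos (inner ubar vbar) = Theta P Q"
    proof
      fix vbar assume vb: "vbar \<in> proj_set (Q \<inter> sphere 0 1) ubar"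
      have nu: "norm ubar = 1" using c S_def by simp
      have vbK: "vbar \<in> Q \<inter> sphere 0 1" using vb unfolding proj_set_def by auto
      have ae: "F_fun Q ubar = inner ubar vbar \<and> inner_angle Q ubar = arccos (inner ubar vbar)"
        by (rule angle_eq[OF nu vbK]) (rule proj_max[OF vb nu])
      show "inner_angle Q ubar = Theta P Q \<and>
                arccos (inner ubar vbar) = inner_angle Q ubar \<and>
                arccos (inner ubar vbar) = Theta P Q"
        using ae kk by simp
    qed
  qed
qed

end
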